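(* Let $r\in\{-1,+1\}$ and $\Phi(x,y)=r\phi(x-y)$. Let $f:\mathbb R^n\to\overline{\mathbb R}$ be left $\Phi$-convex, and let $\bar x\in\mathbb R^n$ be a point where $f$ is finite and strictly continuous. Then $\partial_\Phi f(\bar x)$ is nonempty and compact.
   Context: Standing assumption: $\phi:\mathbb R^n\to\mathbb R$ is convex, finite-valued, differentiable and strictly convex (Legendre with full domain), super-coercive. Left $\Phi$-convex: $f=\sup_{i\in I}\Phi(\cdot,y_i)-\beta_i$ for some family $(y_i,\beta_i)\in\mathbb R^n\times\overline{\mathbb R}$. For $\bar x\in\operatorname{dom}f$, $\partial_\Phi f(\bar x)=\{\bar y: f(x)\ge f(\bar x)+\Phi(x,\bar y)-\Phi(\bar x,\bar y)\ \forall x\}$. $f$ is strictly continuous at $\bar x$ (with $f(\bar x)$ finite) if $\limsup_{x,x'\to\bar x,\,x\neq x'}|f(x)-f(x')|/\|x-x'\|<\infty$. *)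

theory Defs
  imports "HOL-Analysis.Analysis"
begin

definition strictly_convex_on :: "'a::real_vector set \<Rightarrow> ('a \<Rightarrow> real) \<Rightarrow> bool" where
  "strictly_convex_on S g \<longleftrightarrow>
     (\<forall>x\<in>S. \<forall>y\<in>S. \<forall>t::real. x \<noteq> y \<and> 0 < t \<and> t < 1 \<longrightarrow>
        g ((1 - t) *\<^sub>R x + t *\<^sub>R y) < (1 - t) * g x + t * g y)"

definition legendre_supercoercive :: "('a::euclidean_space \<Rightarrow> real) \<Rightarrow> bool" where
  "legendre_supercoercive phi \<longleftrightarrow>
     convex_on UNIV phi \<and> (\<forall>x. phi differentiable (at x)) \<and> strictly_convex_on UNIV phi \<and>
     filterlim (\<lambda>x. phi x / norm x) at_top at_infinity"

definition left_Phi_convex ::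
  "('a \<Rightarrow> 'b \<Rightarrow> real) \<Rightarrow> ('a \<Rightarrow> ereal) \<Rightarrow> bool" where
  "left_Phi_convex Phi f \<longleftrightarrow>
     (\<exists>F :: ('b \<times> ereal) set. \<forall>x. f x = (SUP p\<in>F. ereal (Phi x (fst p)) - snd p))"

definition Phi_subdiff ::
  "('a \<Rightarrow> 'b \<Rightarrow> real) \<Rightarrow> ('a \<Rightarrow> ereal) \<Rightarrow> 'a \<Rightarrow> 'b set" where
  "Phi_subdiff Phi f xb =
     {yb. \<forall>x. f x \<ge> f xb + ereal (Phi x yb - Phi xb yb)}"

definition strictly_continuous_at :: "('a::metric_space \<Rightarrow> ereal) \<Rightarrow> 'a \<Rightarrow> bool" where
  "strictly_continuous_at f xb \<longleftrightarrow>
     \<bar>f xb\<bar> \<noteq> \<infinity> \<and>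
     Limsup (at (xb, xb) within {p. fst p \<noteq> snd p})
        (\<lambda>p. \<bar>f (fst p) - f (snd p)\<bar> / ereal (dist (fst p) (snd p))) < \<infinity>"

end

theory Submission
  imports Defs
begin

lemma bound_lemma:
  fixes phi :: "'a::real_normed_vector \<Rightarrow> real"
  assumes conv: "convex_on UNIV phi"
    and coer: "filterlim (\<lambda>x. phi x / norm x) at_top at_infinity"
    and r: "r \<in> {-1, 1::real}" and dpos: "\<delta> > 0"
  shows "\<exists>R. \<forall>y. (\<forall>x. dist x xb < \<delta> \<longrightarrow> r*phi(x-y) - r*phi(xb-y) \<le> 1 + L*dist x xb)
              \<longrightarrow> norm (xb - y) \<le> R"
proof -
  define \<epsilon> where "\<epsilon> = \<delta>/2"
  have ep: "\<epsilon> > 0" "\<epsilon> < \<delta>" using dpos by (auto simp: \<epsilon>_def)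
  define K where "K = 1 + L*\<epsilon>"
  define M where "M = K/\<epsilon> + \<bar>phi 0\<bar> + 1"
  have "eventually (\<lambda>z. phi z / norm z \<ge> M) at_infinity"
    using coer by (simp add: filterlim_at_top)
  then obtain b where b: "\<And>z. b \<le> norm z \<Longrightarrow> phi z / norm z \<ge> M"
    unfolding eventually_at_infinity by blast
  show ?thesis
  proof (intro exI allI impI)
    fix y assume H: "\<forall>x. dist x xb < \<delta> \<longrightarrow> r*phi(x-y) - r*phi(xb-y) \<le> 1 + L*dist x xb"
    show "norm (xb - y) \<le> max b (max 1 \<epsilon>) + 1"
    proof (rule ccontr)
      define z where "z = xb - y"
      assume "\<not> norm (xb - y) \<le> max b (max 1 \<epsilon>) + 1"
      hence nz: "norm z > b" "norm z > 1" "norm z > \<epsilon>" by (auto simp: z_def)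
      hence nzp: "norm z > 0" by linarith
      define v where "v = (1/norm z) *\<^sub>R z"
      have nv: "norm v = 1" using nzp by (simp add: v_def)
      have C1: "phi z - phi (z - \<epsilon> *\<^sub>R v) \<le> K"
      proof (cases "r = 1")
        case True
        have "dist (xb + \<epsilon> *\<^sub>R v) xb = \<epsilon>" using nv ep by (simp add: dist_norm)
        hence "r*phi((xb + \<epsilon> *\<^sub>R v)-y) - r*phi(xb-y) \<le> 1 + L*\<epsilon>"
          using H ep by metis
        hence A: "phi (z + \<epsilon> *\<^sub>R v) - phi z \<le> K"
          using True by (simp add: z_def K_def algebra_simps)
        have "phi ((1 - 1/2) *\<^sub>R (z + \<epsilon> *\<^sub>R v) + (1/2) *\<^sub>R (z - \<epsilon> *\<^sub>R v))
              \<le> (1 - 1/2) * phi (z + \<epsilon> *\<^sub>R v) + (1/2) * phi (z - \<epsilon> *\<^sub>R v)"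
          by (rule convex_onD[OF conv]) auto
        moreover have "(1 - 1/2) *\<^sub>R (z + \<epsilon> *\<^sub>R v) + (1/2::real) *\<^sub>R (z - \<epsilon> *\<^sub>R v) = z"
          by (simp add: algebra_simps flip: scaleR_add_left)
        ultimately show ?thesis using A by simp
      next
        case False
        hence rm: "r = -1" using r by auto
        have "dist (xb - \<epsilon> *\<^sub>R v) xb = \<epsilon>" using nv ep by (simp add: dist_norm)
        hence "r*phi((xb - \<epsilon> *\<^sub>R v)-y) - r*phi(xb-y) \<le> 1 + L*\<epsilon>"
          using H ep by metis
        thus ?thesis using rm by (simp add: z_def K_def algebra_simps)
      qed
      define t where "t = \<epsilon> / norm z"
      have t: "0 \<le> t" "t \<le> 1" using ep nz nzp by (auto simp: t_def)
      have "phi ((1 - t) *\<^sub>R z + t *\<^sub>R 0) \<le> (1 - t) * phi z + t * phi 0"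
        by (rule convex_onD[OF conv]) (use t in auto)
      moreover have "(1 - t) *\<^sub>R z + t *\<^sub>R 0 = z - \<epsilon> *\<^sub>R v"
        using nzp by (simp add: t_def v_def algebra_simps)
      ultimately have C2: "phi (z - \<epsilon> *\<^sub>R v) \<le> (1 - t) * phi z + t * phi 0" by simp
      have "t * (phi z - phi 0) \<le> K" using C1 C2 by (simp add: algebra_simps)
      hence "\<epsilon> * (phi z - phi 0) \<le> K * norm z" using nzp by (simp add: t_def field_simps)
      hence E1: "phi z - phi 0 \<le> K / \<epsilon> * norm z" using ep by (simp add: field_simps)
      have "phi z / norm z \<ge> M" using b nz by auto
      hence E2: "phi z \<ge> M * norm z" using nzp by (simp add: field_simps)
      have E3: "phi 0 \<le> \<bar>phi 0\<bar> * norm z" using nz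
        by (metis abs_ge_self abs_ge_zero dual_order.trans less_le_not_le mult_le_cancel_left1)
      show False using E1 E2 E3 nzp by (simp add: M_def algebra_simps)
    qed
  qed
qed


lemma local_upper:
  fixes f :: "'a::metric_space \<Rightarrow> ereal"
  assumes "strictly_continuous_at f xb"
  shows "\<exists>\<delta>>0. \<exists>L. \<forall>x. dist x xb < \<delta> \<longrightarrow> f x \<le> f xb + ereal (L * dist x xb)"
proof -
  have fin: "\<bar>f xb\<bar> \<noteq> \<infinity>" and ls:
    "Limsup (at (xb, xb) within {p. fst p \<noteq> snd p})
        (\<lambda>p. \<bar>f (fst p) - f (snd p)\<bar> / ereal (dist (fst p) (snd p))) < \<infinity>"
    using assms unfolding strictly_continuous_at_def by (rule conjunct1, rule conjunct2)
  obtain C :: real where C: "Limsup (at (xb, xb) within {p. fst p \<noteq> snd p})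
        (\<lambda>p. \<bar>f (fst p) - f (snd p)\<bar> / ereal (dist (fst p) (snd p))) < ereal C"
  proof -
    from less_PInf_Ex_of_nat[THEN iffD1, OF less_imp_neq[OF ls]] obtain n :: nat where
      "Limsup (at (xb, xb) within {p. fst p \<noteq> snd p})
        (\<lambda>p. \<bar>f (fst p) - f (snd p)\<bar> / ereal (dist (fst p) (snd p))) < ereal (real n)" ..
    thus ?thesis by (rule that)
  qed
  have "eventually (\<lambda>p. \<bar>f (fst p) - f (snd p)\<bar> / ereal (dist (fst p) (snd p)) < ereal C)
          (at (xb, xb) within {p. fst p \<noteq> snd p})"
    by (rule Limsup_lessD[OF C])
  then obtain d where d: "d > 0" and dH: "\<And>p. p \<in> {p. fst p \<noteq> snd p} \<Longrightarrow> p \<noteq> (xb,xb) \<Longrightarrow>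
       dist p (xb,xb) < d \<Longrightarrow> \<bar>f (fst p) - f (snd p)\<bar> / ereal (dist (fst p) (snd p)) < ereal C"
    unfolding eventually_at by blast
  obtain fb where fb: "f xb = ereal fb" using fin by (cases "f xb") auto
  have main: "f x \<le> f xb + ereal (C * dist x xb)" if dx: "dist x xb < d" for x

    proof (cases "x = xb")
      case True thus ?thesis using fb by simp
    next
      case False
      have dp: "dist x xb > 0" using False by simp
      have "dist (x, xb) (xb, xb) = dist x xb" by (simp add: dist_Pair_Pair)
      hence Q: "\<bar>f x - f xb\<bar> / ereal (dist x xb) < ereal C"
        using dH[of "(x,xb)"] False dx by auto
      show ?thesis
      proof (cases "f x")
        case (real a)
        have "\<bar>a - fb\<bar> / dist x xb < C" using Q real fb dp by simp
        hence "\<bar>a - fb\<bar> < C * dist x xb" using dp by (simp add: field_simps)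
        thus ?thesis using real fb by simp
      next
        case PInf
        then show ?thesis using Q fb dp by simp
      next
        case MInf
        then show ?thesis by simp
      qed
    qed
  show ?thesis using d main by blast
qed


theorem mainTheorem9:
  fixes phi :: "real ^ 'n \<Rightarrow> real" and r :: real
    and f :: "real ^ 'n \<Rightarrow> ereal" and xb :: "real ^ 'n"
  assumes "legendre_supercoercive phi"
    and "r \<in> {-1, 1}"
    and "left_Phi_convex (\<lambda>x y. r * phi (x - y)) f"
    and "strictly_continuous_at f xb"
  shows "Phi_subdiff (\<lambda>x y. r * phi (x - y)) f xb \<noteq> {} \<and>
         compact (Phi_subdiff (\<lambda>x y. r * phi (x - y)) f xb)"
proof -
  have conv: "convex_on UNIV phi" and diff: "\<And>x. phi differentiable (at x)"
    and coer: "filterlim (\<lambda>x. phi x / norm x) at_top at_infinity"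
    using assms(1) unfolding legendre_supercoercive_def by auto
  have cont: "\<And>x. isCont phi x" by (rule differentiable_imp_continuous_within[OF diff])
  have contphi: "continuous_on UNIV phi" by (simp add: continuous_at_imp_continuous_on cont)
  obtain F :: "((real^'n) \<times> ereal) set" where fF:
    "\<And>x. f x = (SUP p\<in>F. ereal (r * phi (x - fst p)) - snd p)"
    using assms(3) unfolding left_Phi_convex_def by blast
  have fin: "\<bar>f xb\<bar> \<noteq> \<infinity>" using assms(4) unfolding strictly_continuous_at_def by (rule conjunct1)
  obtain fb where fb: "f xb = ereal fb" using fin by (cases "f xb") auto
  obtain \<delta> L where dpos: "\<delta> > 0" and up: "\<And>x. dist x xb < \<delta> \<Longrightarrow> f x \<le> f xb + ereal (L * dist x xb)"
    using local_upper[OF assms(4)] by blast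
  from bound_lemma[OF conv coer assms(2) dpos, of xb L] obtain R where R0:
    "\<forall>y. (\<forall>x. dist x xb < \<delta> \<longrightarrow> r*phi(x-y) - r*phi(xb-y) \<le> 1 + L*dist x xb)
              \<longrightarrow> norm (xb - y) \<le> R" ..
  note R = R0[rule_format]
  have upper: "\<And>p x. p \<in> F \<Longrightarrow> ereal (r * phi (x - fst p)) - snd p \<le> f x"
    unfolding fF by (rule SUP_upper)
  let ?S = "Phi_subdiff (\<lambda>x y. r * phi (x - y)) f xb"
  have Sdef: "?S = {y. \<forall>x. ereal (fb + (r * phi (x - y) - r * phi (xb - y))) \<le> f x}"
    unfolding Phi_subdiff_def fb by simp
  have "\<exists>p\<in>F. ereal (fb - 1/(real k+1)) < ereal (r * phi (xb - fst p)) - snd p" for k :: nat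
  proof -
    have "ereal (fb - 1/(real k+1)) < f xb" using fb by simp
    thus ?thesis unfolding fF by (simp add: less_SUP_iff)
  qed
  then obtain p where pF: "\<And>k. p k \<in> F" and pl:
    "\<And>k. ereal (fb - 1/(real k+1)) < ereal (r * phi (xb - fst (p k))) - snd (p k)"
    by metis
  have "\<exists>b. snd (p k) = ereal b" for k
  proof (cases "snd (p k)")
    case PInf thus ?thesis using pl[of k] by simp
  next
    case MInf
    have "ereal (r * phi (xb - fst (p k))) - snd (p k) \<le> f xb" using upper[OF pF[of k], of xb] .
    thus ?thesis using MInf fb by simp
  qed auto
  then obtain b where b: "\<And>k. snd (p k) = ereal (b k)" by metis
  define y where "y k = fst (p k)" for k
  have pl2: "fb - 1/(real k+1) < r * phi (xb - y k) - b k" for k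
    using pl[of k] b[of k] by (simp add: y_def)
  have up2: "ereal (r * phi (x - y k) - b k) \<le> f x" for x k
    using upper[OF pF[of k], of x] b[of k] by (simp add: y_def)
  have ybd: "norm (xb - y k) \<le> R" for k
  proof (rule R)
    fix x assume dx: "dist x xb < \<delta>"
    have "ereal (r * phi (x - y k) - b k) \<le> ereal (fb + L * dist x xb)"
      using order_trans[OF up2[of x k] up[OF dx]] fb by simp
    hence "r * phi (x - y k) - b k \<le> fb + L * dist x xb" by simp
    moreover have "1/(real k+1) \<le> 1" by (simp add: field_simps)
    ultimately show "r*phi(x-y k) - r*phi(xb-y k) \<le> 1 + L*dist x xb" using pl2[of k] by linarith
  qed
  have "\<forall>k. y k \<in> cball xb R" using ybd by (simp add: dist_norm)
  then obtain yb \<sigma> where ybin: "yb \<in> cball xb R" and \<sigma>: "strict_mono \<sigma>"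
    and lim: "(y \<circ> \<sigma>) \<longlonglongrightarrow> yb"
    using seq_compactE[OF compact_imp_seq_compact[OF compact_cball[of xb R]]] by blast
  have "yb \<in> ?S"
    unfolding Sdef
  proof (intro CollectI allI)
    fix x
    define g where "g k = r * phi (x - y (\<sigma> k)) - r * phi (xb - y (\<sigma> k)) + fb - 1/(real (\<sigma> k)+1)" for k
    have "g k \<le> r * phi (x - y (\<sigma> k)) - b (\<sigma> k)" for k
      using pl2[of "\<sigma> k"] by (simp add: g_def)
    hence gle: "ereal (g k) \<le> f x" for k using up2[of x "\<sigma> k"] order_trans ereal_less_eq(3) by blast
    have l1: "(\<lambda>k. y (\<sigma> k)) \<longlonglongrightarrow> yb" using lim by (simp add: comp_def)
    have l2: "(\<lambda>k. phi (x - y (\<sigma> k))) \<longlonglongrightarrow> phi (x - yb)"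
      by (rule isCont_tendsto_compose[OF cont]) (intro tendsto_intros l1)
    have l3: "(\<lambda>k. phi (xb - y (\<sigma> k))) \<longlonglongrightarrow> phi (xb - yb)"
      by (rule isCont_tendsto_compose[OF cont]) (intro tendsto_intros l1)
    have "(\<lambda>k. 1/(real (\<sigma> k)+1)) \<longlonglongrightarrow> 0"
    proof -
      have "(\<lambda>k. 1/(real k+1)) \<longlonglongrightarrow> (0::real)"
        using LIMSEQ_inverse_real_of_nat by (simp add: inverse_eq_divide add.commute)
      thus ?thesis using LIMSEQ_subseq_LIMSEQ[OF _ \<sigma>] by (simp add: comp_def)
    qed
    hence "g \<longlonglongrightarrow> r * phi (x - yb) - r * phi (xb - yb) + fb - 0"
      unfolding g_def by (intro tendsto_intros l2 l3)
    hence gl: "g \<longlonglongrightarrow> r * phi (x - yb) - r * phi (xb - yb) + fb" by simp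
    have "ereal (r * phi (x - yb) - r * phi (xb - yb) + fb) \<le> f x"
      by (rule LIMSEQ_le_const2[OF tendsto_ereal[OF gl]]) (use gle in auto)
    thus "ereal (fb + (r * phi (x - yb) - r * phi (xb - yb))) \<le> f x" by (simp add: algebra_simps)
  qed
  hence ne: "?S \<noteq> {}" by blast
  have bdd: "bounded ?S"
  proof -
    have "?S \<subseteq> cball xb R"
    proof
      fix z assume "z \<in> ?S"
      hence zS: "\<And>x. ereal (fb + (r * phi (x - z) - r * phi (xb - z))) \<le> f x" unfolding Sdef by blast
      have "norm (xb - z) \<le> R"
      proof (rule R)
        fix x assume dx: "dist x xb < \<delta>"
        have "ereal (fb + (r * phi (x - z) - r * phi (xb - z))) \<le> ereal (fb + L * dist x xb)"
          using order_trans[OF zS[of x] up[OF dx]] fb by simp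
        thus "r*phi(x-z) - r*phi(xb-z) \<le> 1 + L*dist x xb" by simp
      qed
      thus "z \<in> cball xb R" by (simp add: dist_norm)
    qed
    thus ?thesis using bounded_cball bounded_subset by blast
  qed
  have cl: "closed ?S"
  proof -
    have "?S = (\<Inter>x. {y. ereal (fb + (r * phi (x - y) - r * phi (xb - y))) \<le> (\<lambda>_. f x) y})"
      unfolding Sdef by auto
    moreover have "closed {y. ereal (fb + (r * phi (x - y) - r * phi (xb - y))) \<le> (\<lambda>_. f x) y}" for x
      by (intro closed_Collect_le continuous_on_ereal continuous_intros
          continuous_on_compose2[OF contphi]) auto
    ultimately show ?thesis by (simp add: closed_INT)
  qed
  show ?thesis using ne bdd cl compact_eq_bounded_closed by blast
qed

end
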